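(* For every $a\in\mathbb{S}$ and every finite tuple $u_1,\dots,u_i\in\mathbb{S}\setminus a^\perp$, there are infinitely many $b\in a^\perp$ such that for all $1\le j\le i$: $a\to u_j$ iff $b\to u_j$. Consequently, for any finite set $F\subseteq\mathbb{S}$ and any column $C$ of $\mathbb{S}$ disjoint from $F$, the subgroup of $\mathrm{Aut}(\mathbb{S})$ consisting of automorphisms fixing $F$ pointwise and $C$ setwise has no finite orbits on $C$.
   Context: Directed graphs are simple and loopless ($x\to y$ denotes a directed edge, at most one direction between two distinct vertices). $\mathcal{S}$ is the class of finite such graphs in which $x\perp y:\Leftrightarrow\neg(x\to y\vee y\to x)$ is an equivalence relation (its classes are called columns; $a^\perp$ denotes the column of $a$) and satisfying the parity condition: for $x_1\neq x_2$, $y_1\neq y_2$ with $x_1\perp x_2$, $y_1\perp y_2$, the number of directed edges from $\{x_1,x_2\}$ to $\{y_1,y_2\}$ is even. $\mathbb{S}$ (the semigeneric directed graph) is the Fraïssé limit of $\mathcal{S}$, i.e. the countable homogeneous directed graph whose finite induced substructures are exactly the members of $\mathcal{S}$ up to isomorphism. *)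

theory Defs
  imports Main "HOL-Library.Countable_Set"
begin

definition perp :: "('a \<Rightarrow> 'a \<Rightarrow> bool) \<Rightarrow> 'a \<Rightarrow> 'a \<Rightarrow> bool" where
  "perp E x y \<longleftrightarrow> \<not> (E x y \<or> E y x)"

definition simple_digraph :: "'a set \<Rightarrow> ('a \<Rightarrow> 'a \<Rightarrow> bool) \<Rightarrow> bool" where
  "simple_digraph A E \<longleftrightarrow> (\<forall>x\<in>A. \<not> E x x) \<and> (\<forall>x\<in>A. \<forall>y\<in>A. \<not> (E x y \<and> E y x))"

definition in_class_S :: "'a set \<Rightarrow> ('a \<Rightarrow> 'a \<Rightarrow> bool) \<Rightarrow> bool" where
  "in_class_S A E \<longleftrightarrow> finite A \<and> simple_digraph A E \<and>
     (\<forall>x\<in>A. perp E x x) \<and>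
     (\<forall>x\<in>A. \<forall>y\<in>A. perp E x y \<longrightarrow> perp E y x) \<and>
     (\<forall>x\<in>A. \<forall>y\<in>A. \<forall>z\<in>A. perp E x y \<longrightarrow> perp E y z \<longrightarrow> perp E x z) \<and>
     (\<forall>x1\<in>A. \<forall>x2\<in>A. \<forall>y1\<in>A. \<forall>y2\<in>A.
        x1 \<noteq> x2 \<longrightarrow> y1 \<noteq> y2 \<longrightarrow> perp E x1 x2 \<longrightarrow> perp E y1 y2 \<longrightarrow>
        even (card {(x, y). x \<in> {x1, x2} \<and> y \<in> {y1, y2} \<and> E x y}))"

definition is_aut :: "'a set \<Rightarrow> ('a \<Rightarrow> 'a \<Rightarrow> bool) \<Rightarrow> ('a \<Rightarrow> 'a) \<Rightarrow> bool" where
  "is_aut V E g \<longleftrightarrow> bij_betw g V V \<and> (\<forall>x\<in>V. \<forall>y\<in>V. E x y \<longleftrightarrow> E (g x) (g y))"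

definition homogeneous :: "'a set \<Rightarrow> ('a \<Rightarrow> 'a \<Rightarrow> bool) \<Rightarrow> bool" where
  "homogeneous V E \<longleftrightarrow> (\<forall>A B f. finite A \<and> A \<subseteq> V \<and> B \<subseteq> V \<and> bij_betw f A B \<and>
      (\<forall>x\<in>A. \<forall>y\<in>A. E x y \<longleftrightarrow> E (f x) (f y)) \<longrightarrow>
      (\<exists>g. is_aut V E g \<and> (\<forall>x\<in>A. g x = f x)))"

text \<open>Age of (V,E) is exactly S up to isomorphism: every finite induced
  substructure lies in S, and every member of S (represented on a finite set of
  naturals, which loses no generality) embeds as an induced substructure.\<close>
definition age_is_S :: "'a set \<Rightarrow> ('a \<Rightarrow> 'a \<Rightarrow> bool) \<Rightarrow> bool" where
  "age_is_S V E \<longleftrightarrow>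
     (\<forall>A. finite A \<and> A \<subseteq> V \<longrightarrow> in_class_S A E) \<and>
     (\<forall>(A :: nat set) R. in_class_S A R \<longrightarrow>
        (\<exists>f. inj_on f A \<and> f ` A \<subseteq> V \<and> (\<forall>x\<in>A. \<forall>y\<in>A. R x y \<longleftrightarrow> E (f x) (f y))))"

text \<open>(V,E) is (an isomorphic copy of) the semigeneric directed graph: the countable
  homogeneous digraph whose age is S (Fraisse limit, unique up to isomorphism).\<close>
definition semigeneric :: "'a set \<Rightarrow> ('a \<Rightarrow> 'a \<Rightarrow> bool) \<Rightarrow> bool" where
  "semigeneric V E \<longleftrightarrow> countable V \<and> homogeneous V E \<and> age_is_S V E"

definition column :: "'a set \<Rightarrow> ('a \<Rightarrow> 'a \<Rightarrow> bool) \<Rightarrow> 'a \<Rightarrow> 'a set" where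
  "column V E a = {x \<in> V. perp E a x}"

end

theory Submission
  imports Defs
begin


lemma card4:
  assumes "x1 \<noteq> x2" "y1 \<noteq> y2"
  shows "card {(x, y). x \<in> {x1, x2} \<and> y \<in> {y1, y2} \<and> P x y} =
    of_bool (P x1 y1) + of_bool (P x1 y2) + of_bool (P x2 y1) + of_bool (P x2 y2)"
proof -
  have eqS: "{(x, y). x \<in> {x1, x2} \<and> y \<in> {y1, y2} \<and> P x y} =
     (if P x1 y1 then {(x1,y1)} else {}) \<union> (if P x1 y2 then {(x1,y2)} else {}) \<union>
     (if P x2 y1 then {(x2,y1)} else {}) \<union> (if P x2 y2 then {(x2,y2)} else {})"
    (is "_ = ?S") by auto
  have "card ?S = of_bool (P x1 y1) + of_bool (P x1 y2) + of_bool (P x2 y1) + of_bool (P x2 y2)" using assms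
    by (cases "P x1 y1"; cases "P x1 y2"; cases "P x2 y1"; cases "P x2 y2") (simp_all add: card_insert_if)
  then show ?thesis using eqS by simp
qed



lemma classS_parts:
  assumes "in_class_S A E"
  shows "finite A" "\<And>x. x\<in>A \<Longrightarrow> \<not> E x x" "\<And>x y. x\<in>A \<Longrightarrow> y\<in>A \<Longrightarrow> \<not> (E x y \<and> E y x)"
    "\<And>x y z. x\<in>A \<Longrightarrow> y\<in>A \<Longrightarrow> z\<in>A \<Longrightarrow> perp E x y \<Longrightarrow> perp E y z \<Longrightarrow> perp E x z"
    "\<And>x1 x2 y1 y2. x1\<in>A \<Longrightarrow> x2\<in>A \<Longrightarrow> y1\<in>A \<Longrightarrow> y2\<in>A \<Longrightarrow>
        x1 \<noteq> x2 \<Longrightarrow> y1 \<noteq> y2 \<Longrightarrow> perp E x1 x2 \<Longrightarrow> perp E y1 y2 \<Longrightarrow>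
        even (card {(x, y). x \<in> {x1, x2} \<and> y \<in> {y1, y2} \<and> E x y})"
proof -
  note h = assms[unfolded in_class_S_def simple_digraph_def]
  from h show "finite A" by (elim conjE)
  from h show "\<And>x. x\<in>A \<Longrightarrow> \<not> E x x" by (elim conjE) blast
  from h show "\<And>x y. x\<in>A \<Longrightarrow> y\<in>A \<Longrightarrow> \<not> (E x y \<and> E y x)" by (elim conjE) blast
  from h show "\<And>x y z. x\<in>A \<Longrightarrow> y\<in>A \<Longrightarrow> z\<in>A \<Longrightarrow> perp E x y \<Longrightarrow> perp E y z \<Longrightarrow> perp E x z"
    by (elim conjE) blast
  from h show "\<And>x1 x2 y1 y2. x1\<in>A \<Longrightarrow> x2\<in>A \<Longrightarrow> y1\<in>A \<Longrightarrow> y2\<in>A \<Longrightarrow>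
        x1 \<noteq> x2 \<Longrightarrow> y1 \<noteq> y2 \<Longrightarrow> perp E x1 x2 \<Longrightarrow> perp E y1 y2 \<Longrightarrow>
        even (card {(x, y). x \<in> {x1, x2} \<and> y \<in> {y1, y2} \<and> E x y})"
    by (elim conjE) blast
qed

lemma pullback:
  assumes A: "in_class_S A E" and D: "finite D" and c: "c ` D \<subseteq> A"
  shows "in_class_S D (\<lambda>x y. E (c x) (c y))"
proof -
  let ?R = "\<lambda>x y. E (c x) (c y)"
  have pe: "perp ?R x y = perp E (c x) (c y)" for x y by (simp add: perp_def)
  have cA: "x \<in> D \<Longrightarrow> c x \<in> A" for x using c by auto
  note AP = classS_parts[OF A]
  have par: "even (card {(x, y). x \<in> {x1, x2} \<and> y \<in> {y1, y2} \<and> ?R x y})"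
    if h: "x1 \<in> D" "x2 \<in> D" "y1 \<in> D" "y2 \<in> D" "x1 \<noteq> x2" "y1 \<noteq> y2"
       "perp ?R x1 x2" "perp ?R y1 y2" for x1 x2 y1 y2
  proof -
    have eq: "card {(x, y). x \<in> {x1, x2} \<and> y \<in> {y1, y2} \<and> ?R x y} =
      of_bool (E (c x1) (c y1)) + of_bool (E (c x1) (c y2)) + of_bool (E (c x2) (c y1)) + of_bool (E (c x2) (c y2))"
      using card4[OF h(5,6), of ?R] by simp
    show ?thesis
    proof (cases "c x1 = c x2 \<or> c y1 = c y2")
      case True then show ?thesis unfolding eq by auto
    next
      case False
      have "even (card {(x, y). x \<in> {c x1, c x2} \<and> y \<in> {c y1, c y2} \<and> E x y})"
        apply (rule AP(5))
        using False h(1-4) cA h(7,8) unfolding pe by auto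
      then show ?thesis unfolding eq using card4[of "c x1" "c x2" "c y1" "c y2" E] False by simp
    qed
  qed
  have r1: "\<forall>x\<in>D. \<not> ?R x x" using AP(2) cA by blast
  have r2: "\<forall>x\<in>D. \<forall>y\<in>D. \<not> (?R x y \<and> ?R y x)" using AP(3) cA by blast
  have r3: "\<forall>x\<in>D. perp ?R x x" using AP(2) cA by (simp add: perp_def)
  have r4: "\<forall>x\<in>D. \<forall>y\<in>D. perp ?R x y \<longrightarrow> perp ?R y x" by (auto simp: perp_def)
  have r5: "\<forall>x\<in>D. \<forall>y\<in>D. \<forall>z\<in>D. perp ?R x y \<longrightarrow> perp ?R y z \<longrightarrow> perp ?R x z"
    unfolding pe using AP(4) cA by blast
  show ?thesis unfolding in_class_S_def simple_digraph_def
    using D r1 r2 r3 r4 r5 par by blast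
qed



lemma sg_parts:
  assumes "semigeneric V E"
  shows "homogeneous V E" "\<And>A. finite A \<Longrightarrow> A \<subseteq> V \<Longrightarrow> in_class_S A E"
    "\<And>(A :: nat set) R. in_class_S A R \<Longrightarrow>
        (\<exists>f. inj_on f A \<and> f ` A \<subseteq> V \<and> (\<forall>x\<in>A. \<forall>y\<in>A. R x y \<longleftrightarrow> E (f x) (f y)))"
  using assms unfolding semigeneric_def age_is_S_def by blast+

lemma sg_noloop: "semigeneric V E \<Longrightarrow> x \<in> V \<Longrightarrow> \<not> E x x"
  using classS_parts(2)[OF sg_parts(2)[of V E "{x}"]] by auto

lemma sg_antisym: "semigeneric V E \<Longrightarrow> x \<in> V \<Longrightarrow> y \<in> V \<Longrightarrow> \<not> (E x y \<and> E y x)"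
  using classS_parts(3)[OF sg_parts(2)[of V E "{x,y}"]] by auto

lemma sg_trans: "semigeneric V E \<Longrightarrow> x \<in> V \<Longrightarrow> y \<in> V \<Longrightarrow> z \<in> V \<Longrightarrow> perp E x y \<Longrightarrow> perp E y z \<Longrightarrow> perp E x z"
  using classS_parts(4)[OF sg_parts(2)[of V E "{x,y,z}"]] by auto

lemma hom_use:
  assumes "homogeneous V E" "finite A" "A \<subseteq> V" "B \<subseteq> V" "bij_betw f A B"
    "\<forall>x\<in>A. \<forall>y\<in>A. E x y \<longleftrightarrow> E (f x) (f y)"
  shows "\<exists>g. is_aut V E g \<and> (\<forall>x\<in>A. g x = f x)"
  using assms unfolding homogeneous_def by blast

lemma perp_sym: "perp E x y \<Longrightarrow> perp E y x" by (auto simp: perp_def)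

lemma clone:
  assumes sg: "semigeneric V E" and fin: "finite A" and AV: "A \<subseteq> V" and a: "a \<in> A"
  shows "\<exists>b\<in>V - A. (\<forall>x\<in>A. E b x \<longleftrightarrow> E a x) \<and> (\<forall>x\<in>A. E x b \<longleftrightarrow> E x a)"
proof -
  note hom = sg_parts(1)[OF sg]
  have AS: "in_class_S A E" using sg_parts(2)[OF sg fin AV] .
  obtain h where h: "bij_betw h {0..<card A} A" using ex_bij_betw_nat_finite fin by blast
  define n where "n = card A"
  have h': "bij_betw h {..<n} A" using h by (simp add: n_def atLeast0LessThan)
  define c where "c k = (if k < n then h k else a)" for k
  have cD: "c ` {..n} \<subseteq> A" using h' a by (auto simp: c_def bij_betw_def)
  have DS: "in_class_S {..n} (\<lambda>x y. E (c x) (c y))" by (rule pullback[OF AS _ cD]) simp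
  obtain f where f: "inj_on f {..n}" "f ` {..n} \<subseteq> V"
      "\<forall>x\<in>{..n}. \<forall>y\<in>{..n}. E (c x) (c y) \<longleftrightarrow> E (f x) (f y)"
    using sg_parts(3)[OF sg DS] by blast
  have finj: "inj_on f {..<n}" by (rule inj_on_subset[OF f(1)]) auto
  have fbij: "bij_betw f {..<n} (f ` {..<n})"
    using finj by (auto simp: bij_betw_def)
  define p where "p = h \<circ> inv_into {..<n} f"
  have pb: "bij_betw p (f ` {..<n}) A"
    unfolding p_def using bij_betw_trans[OF bij_betw_inv_into[OF fbij] h'] .
  have pf: "p (f k) = h k" if "k < n" for k
    using that finj by (simp add: p_def inv_into_f_f)
  have pe: "\<forall>x\<in>f ` {..<n}. \<forall>y\<in>f ` {..<n}. E x y \<longleftrightarrow> E (p x) (p y)"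
  proof (intro ballI)
    fix x y assume "x \<in> f ` {..<n}" "y \<in> f ` {..<n}"
    then obtain k l where kl: "k < n" "l < n" "x = f k" "y = f l" by auto
    have "E (c k) (c l) \<longleftrightarrow> E (f k) (f l)" using f(3) kl by auto
    then show "E x y \<longleftrightarrow> E (p x) (p y)" using pf kl by (simp add: c_def)
  qed
  have "finite (f ` {..<n})" "f ` {..<n} \<subseteq> V" using f(2) by auto
  then have "\<exists>g. is_aut V E g \<and> (\<forall>x\<in>f ` {..<n}. g x = p x)"
    using hom_use[OF hom _ _ _ pb pe] AV by blast
  then obtain g where g: "is_aut V E g" "\<forall>x\<in>f ` {..<n}. g x = p x" by blast
  have gV: "bij_betw g V V" "\<And>x y. x \<in> V \<Longrightarrow> y \<in> V \<Longrightarrow> E x y \<longleftrightarrow> E (g x) (g y)"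
    using g(1) unfolding is_aut_def by auto
  have fnV: "f n \<in> V" using f(2) by auto
  have fkV: "k < n \<Longrightarrow> f k \<in> V" for k using f(2) by auto
  have gfk: "k < n \<Longrightarrow> g (f k) = h k" for k using g(2) pf by auto
  have Aeq: "\<And>x. x \<in> A \<Longrightarrow> \<exists>k<n. x = h k" using h' unfolding bij_betw_def by auto
  show ?thesis
  proof (intro bexI conjI ballI)
    show "g (f n) \<in> V - A"
    proof
      show "g (f n) \<in> V" using gV(1) fnV by (auto simp: bij_betw_def)
      show "g (f n) \<notin> A"
      proof
        assume "g (f n) \<in> A"
        then obtain k where k: "k < n" "g (f n) = h k" using Aeq by blast
        then have "g (f n) = g (f k)" using gfk by simp
        then have "f n = f k" using gV(1) fnV fkV[OF k(1)] by (auto simp: bij_betw_def inj_on_def)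
        then have "n = k" using f(1) k(1) by (auto simp: inj_on_def)
        then show False using k(1) by simp
      qed
    qed
  next
    fix x assume "x \<in> A"
    then obtain k where k: "k < n" "x = h k" using Aeq by blast
    have "E (g (f n)) x \<longleftrightarrow> E (f n) (f k)" using gV(2)[OF fnV fkV[OF k(1)]] gfk[OF k(1)] k by simp
    also have "\<dots> \<longleftrightarrow> E (c n) (c k)" using f(3) k(1) by auto
    finally show "E (g (f n)) x \<longleftrightarrow> E a x" using k by (simp add: c_def)
  next
    fix x assume "x \<in> A"
    then obtain k where k: "k < n" "x = h k" using Aeq by blast
    have "E x (g (f n)) \<longleftrightarrow> E (f k) (f n)" using gV(2)[OF fkV[OF k(1)] fnV] gfk[OF k(1)] k by simp
    also have "\<dots> \<longleftrightarrow> E (c k) (c n)" using f(3) k(1) by auto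
    finally show "E x (g (f n)) \<longleftrightarrow> E x a" using k by (simp add: c_def)
  qed
qed



lemma part1:
  assumes sg: "semigeneric V E" and a: "a \<in> V" and us: "set us \<subseteq> V - column V E a"
  shows "infinite {b \<in> column V E a. \<forall>u\<in>set us. E a u \<longleftrightarrow> E b u}"
proof
  define S where "S = {b \<in> column V E a. \<forall>u\<in>set us. E a u \<longleftrightarrow> E b u}"
  assume fin: "finite {b \<in> column V E a. \<forall>u\<in>set us. E a u \<longleftrightarrow> E b u}"
  then have finS: "finite S" by (simp add: S_def)
  define A where "A = insert a (set us \<union> S)"
  have A1: "finite A" using finS by (simp add: A_def)
  have A2: "A \<subseteq> V" using a us unfolding A_def S_def column_def by auto
  have A3: "a \<in> A" by (simp add: A_def)
  obtain b where b: "b \<in> V - A" "\<forall>x\<in>A. E b x \<longleftrightarrow> E a x" "\<forall>x\<in>A. E x b \<longleftrightarrow> E x a"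
    using clone[OF sg A1 A2 A3] by blast
  have "\<not> E a a" using sg_noloop[OF sg a] .
  then have "perp E a b" using b A3 by (auto simp: perp_def)
  moreover have "\<forall>u\<in>set us. E a u \<longleftrightarrow> E b u" using b(2) unfolding A_def by auto
  ultimately have "b \<in> S" using b(1) unfolding S_def column_def by auto
  then show False using b(1) unfolding A_def by auto
qed

lemma column_sub: "column V E a \<subseteq> V" by (auto simp: column_def)

lemma column_eq:
  assumes sg: "semigeneric V E" and "z \<in> V" "y \<in> column V E z"
  shows "column V E y = column V E z"
proof -
  have y: "y \<in> V" "perp E z y" using assms(3) by (auto simp: column_def)
  have "w \<in> column V E y \<longleftrightarrow> w \<in> column V E z" for w
  proof
    assume "w \<in> column V E y"
    then have "w \<in> V" "perp E y w" by (auto simp: column_def)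
    then show "w \<in> column V E z" using sg_trans[OF sg \<open>z \<in> V\<close> y(1) \<open>w \<in> V\<close> y(2)] by (simp add: column_def)
  next
    assume "w \<in> column V E z"
    then have "w \<in> V" "perp E z w" by (auto simp: column_def)
    then show "w \<in> column V E y" using sg_trans[OF sg y(1) \<open>z \<in> V\<close> \<open>w \<in> V\<close> perp_sym[OF y(2)]] by (simp add: column_def)
  qed
  then show ?thesis by blast
qed

lemma aut_column:
  assumes g: "is_aut V E g" and x: "x \<in> V"
  shows "g ` column V E x = column V E (g x)"
proof -
  have gb: "bij_betw g V V" and ge: "\<And>x y. x \<in> V \<Longrightarrow> y \<in> V \<Longrightarrow> E x y \<longleftrightarrow> E (g x) (g y)"
    using g unfolding is_aut_def by auto
  have pp: "y \<in> V \<Longrightarrow> perp E x y \<longleftrightarrow> perp E (g x) (g y)" for y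
    using ge[OF x] ge[OF _ x] unfolding perp_def by blast
  show ?thesis
  proof
    show "g ` column V E x \<subseteq> column V E (g x)"
      using pp gb unfolding column_def bij_betw_def by auto
    show "column V E (g x) \<subseteq> g ` column V E x"
    proof
      fix z assume z: "z \<in> column V E (g x)"
      then have "z \<in> V" by (simp add: column_def)
      then obtain y where y: "y \<in> V" "z = g y" using gb unfolding bij_betw_def by auto
      then have "perp E x y" using pp z by (simp add: column_def)
      then show "z \<in> g ` column V E x" using y by (auto simp: column_def)
    qed
  qed
qed

theorem mainTheorem7:
  fixes V :: "'a set" and E :: "'a \<Rightarrow> 'a \<Rightarrow> bool"
  assumes "semigeneric V E"
  shows "(\<forall>a\<in>V. \<forall>us. set us \<subseteq> V - column V E a \<longrightarrow>
            infinite {b \<in> column V E a. \<forall>u\<in>set us. E a u \<longleftrightarrow> E b u})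
       \<and> (\<forall>F c. finite F \<and> F \<subseteq> V \<and> c \<in> V \<and> column V E c \<inter> F = {} \<longrightarrow>
            (\<forall>x\<in>column V E c.
               infinite {g x | g. is_aut V E g \<and> (\<forall>y\<in>F. g y = y) \<and>
                                  g ` column V E c = column V E c}))"
proof (intro conjI allI ballI impI)
  note sg = assms
  show "infinite {b \<in> column V E a. \<forall>u\<in>set us. E a u \<longleftrightarrow> E b u}"
    if "a \<in> V" "set us \<subseteq> V - column V E a" for a us using part1[OF sg that] .
  fix F c x
  assume h: "finite F \<and> F \<subseteq> V \<and> c \<in> V \<and> column V E c \<inter> F = {}" and x: "x \<in> column V E c"
  have F: "finite F" "F \<subseteq> V" "c \<in> V" "column V E c \<inter> F = {}" using h by auto
  have xV: "x \<in> V" using x by (simp add: column_def)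
  have cx: "column V E x = column V E c" using column_eq[OF sg F(3) x] .
  obtain us where us: "set us = F" using finite_list[OF F(1)] by blast
  have usV: "set us \<subseteq> V - column V E x" using us F cx by auto
  have inf: "infinite {b \<in> column V E x. \<forall>u\<in>set us. E x u \<longleftrightarrow> E b u}" using part1[OF sg xV usV] .
  have sub: "{b \<in> column V E x. \<forall>u\<in>set us. E x u \<longleftrightarrow> E b u} \<subseteq>
     {g x | g. is_aut V E g \<and> (\<forall>y\<in>F. g y = y) \<and> g ` column V E c = column V E c}"
  proof
    fix b assume "b \<in> {b \<in> column V E x. \<forall>u\<in>set us. E x u \<longleftrightarrow> E b u}"
    then have b: "b \<in> column V E x" "\<And>u. u \<in> F \<Longrightarrow> E x u \<longleftrightarrow> E b u" using us by auto
    have bV: "b \<in> V" using b(1) by (simp add: column_def)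
    have xb: "perp E x b" using b(1) by (simp add: column_def)
    have xF: "x \<notin> F" using x F(4) by blast
    have bF: "b \<notin> F" using b(1) cx F(4) by blast
    have npx: "\<not> perp E x u" if "u \<in> F" for u
      using that usV us by (auto simp: column_def)
    have npb: "\<not> perp E b u" if "u \<in> F" for u
      using npx[OF that] sg_trans[OF sg xV bV _ xb] that F(2) by blast
    define f where "f y = (if y = x then b else y)" for y
    have fb: "bij_betw f (insert x F) (insert b F)"
      unfolding bij_betw_def inj_on_def f_def using xF bF by auto
    have fe: "\<forall>y\<in>insert x F. \<forall>z\<in>insert x F. E y z \<longleftrightarrow> E (f y) (f z)"
    proof (intro ballI)
      fix y z assume y: "y \<in> insert x F" and z: "z \<in> insert x F"
      show "E y z \<longleftrightarrow> E (f y) (f z)"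
      proof (cases "y = x")
        case True
        show ?thesis
        proof (cases "z = x")
          case True then show ?thesis using \<open>y = x\<close> sg_noloop[OF sg xV] sg_noloop[OF sg bV] by (simp add: f_def)
        next
          case False then have "z \<in> F" using z by auto
          then show ?thesis using \<open>y = x\<close> False b(2) by (simp add: f_def)
        qed
      next
        case False then have yF: "y \<in> F" using y by auto
        show ?thesis
        proof (cases "z = x")
          case True
          have yV: "y \<in> V" using yF F(2) by auto
          have "E y x \<longleftrightarrow> \<not> E x y" using npx[OF yF] sg_antisym[OF sg xV yV] by (auto simp: perp_def)
          moreover have "E y b \<longleftrightarrow> \<not> E b y" using npb[OF yF] sg_antisym[OF sg bV yV] by (auto simp: perp_def)
          ultimately show ?thesis using True False b(2)[OF yF] by (simp add: f_def)
        next
          case False2: False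
          then show ?thesis using False by (simp add: f_def)
        qed
      qed
    qed
    obtain g where g: "is_aut V E g" "\<forall>y\<in>insert x F. g y = f y"
      using hom_use[OF sg_parts(1)[OF sg] _ _ _ fb fe] F xV bV by auto
    have gx: "g x = b" using g(2) by (simp add: f_def)
    have gF: "\<forall>y\<in>F. g y = y" using g(2) xF by (auto simp: f_def)
    have "g ` column V E c = column V E c"
      using aut_column[OF g(1) xV] gx cx column_eq[OF sg xV b(1)] by simp
    then show "b \<in> {g x | g. is_aut V E g \<and> (\<forall>y\<in>F. g y = y) \<and> g ` column V E c = column V E c}"
      using g(1) gx gF by blast
  qed
  show "infinite {g x | g. is_aut V E g \<and> (\<forall>y\<in>F. g y = y) \<and> g ` column V E c = column V E c}"
    using infinite_super[OF sub inf] .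
qed


end
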